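(* For $K=K(\delta)>0$, $L=L(\delta)>0$, define on the uniform one-dimensional grid of spacing $h$ the finite difference scheme \[ -F^{1D,e,\delta}[u]=A^{\delta,+}\left(\lvert u_x^h\rvert^+,-u_{xx}^h\right)+A^{\delta,-}\left(-\lvert u_x^h\rvert^-,-u_{xx}^h\right). \] Then $-F^{1D,e,\delta}$ is elliptic and consistent with $-F^{1D,\delta}$, where $F^{1D,\delta}[u]=A^\delta(u_x,u_{xx})$.
   Context: $A(p,q)=(p^2q)^{1/3}$ (real cube root); $A^\delta(p,q)=\operatorname{sgn}(q)\min(\lvert A(p,q)\rvert,K\lvert p\rvert,L\lvert q\rvert)$ with $\operatorname{sgn}(0)=0$; $A^{\delta,+}(p,q)=A^\delta(p^+,q^+)$, $A^{\delta,-}(p,q)=A^\delta(p^-,q^-)$ with $x^+=\max(x,0)$, $x^-=\min(x,0)$. For a grid function $u$: $D^-_xu(x)=\frac{u(x)-u(x-h)}h$, $-D^+_xu(x)=\frac{u(x)-u(x+h)}h$, $\lvert u_x^h\rvert^+=\max\{-D^+_xu,D^-_xu,0\}$, $-\lvert u_x^h\rvert^-=\min\{-D^+_xu,D^-_xu,0\}$, $u_{xx}^h(x)=\frac{u(x+h)-2u(x)+u(x-h)}{h^2}$. A finite difference operator $F^h[u](x)=F^h(x,u(x),u(x)-u(\cdot))$ is elliptic if $r\le s$, $v(\cdot)\le w(\cdot)$ imply $F^h(x,r,v(\cdot))\le F^h(x,s,w(\cdot))$; it is consistent with $F$ if $\lim_{h\to0,\,y\to x}F^h[\phi](y)=F[\phi](x)$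 for every smooth $\phi$. *)

theory Defs
  imports "HOL-Analysis.Analysis"
begin

definition A :: "real \<Rightarrow> real \<Rightarrow> real" where
  "A p q = root 3 (p\<^sup>2 * q)"

definition Adelta :: "real \<Rightarrow> real \<Rightarrow> real \<Rightarrow> real \<Rightarrow> real" where
  "Adelta K L p q = sgn q * min \<bar>A p q\<bar> (min (K * \<bar>p\<bar>) (L * \<bar>q\<bar>))"

definition Adelta_plus :: "real \<Rightarrow> real \<Rightarrow> real \<Rightarrow> real \<Rightarrow> real" where
  "Adelta_plus K L p q = Adelta K L (max p 0) (max q 0)"

definition Adelta_minus :: "real \<Rightarrow> real \<Rightarrow> real \<Rightarrow> real \<Rightarrow> real" where
  "Adelta_minus K L p q = Adelta K L (min p 0) (min q 0)"

definition Dminus :: "real \<Rightarrow> (real \<Rightarrow> real) \<Rightarrow> real \<Rightarrow> real" where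
  "Dminus h u x = (u x - u (x - h)) / h"

definition Dplus :: "real \<Rightarrow> (real \<Rightarrow> real) \<Rightarrow> real \<Rightarrow> real" where
  "Dplus h u x = (u (x + h) - u x) / h"

text \<open>abs_plus = |u_x^h|^+ ; neg_abs_minus = - |u_x^h|^- (as defined in the paper).\<close>
definition abs_plus :: "real \<Rightarrow> (real \<Rightarrow> real) \<Rightarrow> real \<Rightarrow> real" where
  "abs_plus h u x = max (max (- Dplus h u x) (Dminus h u x)) 0"

definition neg_abs_minus :: "real \<Rightarrow> (real \<Rightarrow> real) \<Rightarrow> real \<Rightarrow> real" where
  "neg_abs_minus h u x = min (min (- Dplus h u x) (Dminus h u x)) 0"

definition uxx :: "real \<Rightarrow> (real \<Rightarrow> real) \<Rightarrow> real \<Rightarrow> real" where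
  "uxx h u x = (u (x + h) - 2 * u x + u (x - h)) / h\<^sup>2"

definition schemeE :: "real \<Rightarrow> real \<Rightarrow> real \<Rightarrow> (real \<Rightarrow> real) \<Rightarrow> real \<Rightarrow> real" where
  "schemeE K L h u x =
     Adelta_plus K L (abs_plus h u x) (- uxx h u x)
   + Adelta_minus K L (neg_abs_minus h u x) (- uxx h u x)"

text \<open>Its representation F^h(x, r, v) with v(.) standing for u(x) - u(.):
  -D^+u(x) = v(x+h)/h, D^-u(x) = v(x-h)/h, -u_xx(x) = (v(x+h)+v(x-h))/h^2.\<close>
definition schemeE_rep :: "real \<Rightarrow> real \<Rightarrow> real \<Rightarrow> real \<Rightarrow> real \<Rightarrow> (real \<Rightarrow> real) \<Rightarrow> real" where
  "schemeE_rep K L h x r v =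
     (let mDp = v (x + h) / h; Dm = v (x - h) / h; muxx = (v (x + h) + v (x - h)) / h\<^sup>2
      in Adelta_plus K L (max (max mDp Dm) 0) muxx + Adelta_minus K L (min (min mDp Dm) 0) muxx)"

definition fd_elliptic :: "(real \<Rightarrow> real \<Rightarrow> (real \<Rightarrow> real) \<Rightarrow> real) \<Rightarrow> bool" where
  "fd_elliptic Fh \<longleftrightarrow>
     (\<forall>x r s v w. r \<le> s \<longrightarrow> (\<forall>y. v y \<le> w y) \<longrightarrow> Fh x r v \<le> Fh x s w)"

definition smooth_fun :: "(real \<Rightarrow> real) \<Rightarrow> bool" where
  "smooth_fun \<phi> \<longleftrightarrow>
     (\<exists>D. D 0 = \<phi> \<and> (\<forall>n z. (D n has_real_derivative D (Suc n) z) (at z)))"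

definition fd_consistent ::
  "(real \<Rightarrow> (real \<Rightarrow> real) \<Rightarrow> real \<Rightarrow> real) \<Rightarrow> ((real \<Rightarrow> real) \<Rightarrow> real \<Rightarrow> real) \<Rightarrow> bool" where
  "fd_consistent Fh F \<longleftrightarrow>
     (\<forall>\<phi> x. smooth_fun \<phi> \<longrightarrow>
        ((\<lambda>(h, y). Fh h \<phi> y) \<longlongrightarrow> F \<phi> x) (at (0, x) within ({0<..} \<times> UNIV)))"

definition F1D :: "real \<Rightarrow> real \<Rightarrow> (real \<Rightarrow> real) \<Rightarrow> real \<Rightarrow> real" where
  "F1D K L u x = Adelta K L (deriv u x) (deriv (deriv u) x)"

end

theory Submission
  imports Defs
begin

lemma Adelta_alt:
  assumes "K \<ge> 0" "L > 0"
  shows "Adelta K L p q = max (- min \<bar>A p q\<bar> (K * \<bar>p\<bar>)) (min (min \<bar>A p q\<bar> (K * \<bar>p\<bar>)) (L * q))"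
proof -
  define M where "M = min \<bar>A p q\<bar> (K * \<bar>p\<bar>)"
  have M0: "M \<ge> 0" using assms unfolding M_def by auto
  have "Adelta K L p q = sgn q * min M (L * \<bar>q\<bar>)"
    unfolding Adelta_def M_def by (simp add: min.assoc)
  also have "\<dots> = max (- M) (min M (L * q))"
  proof (cases q "0::real" rule: linorder_cases)
    case less
    then have "L*q < 0" using assms by (simp add: mult_pos_neg)
    then show ?thesis using less M0 by (auto simp: min_def max_def)
  next
    case equal then show ?thesis using M0 by auto
  next
    case greater
    then have "L*q > 0" using assms by simp
    then show ?thesis using greater M0 by (auto simp: min_def max_def)
  qed
  finally show ?thesis unfolding M_def .
qed

lemma Adelta_cont:
  assumes "K \<ge> 0" "L > 0" "(f \<longlongrightarrow> a) F" "(g \<longlongrightarrow> b) F"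
  shows "((\<lambda>t. Adelta K L (f t) (g t)) \<longlongrightarrow> Adelta K L a b) F"
  unfolding Adelta_alt[OF assms(1,2)] A_def
  by (intro tendsto_intros assms(3,4))

lemma clampP: "(0::real) \<le> M \<Longrightarrow> M \<le> M' \<Longrightarrow> 0 \<le> X \<Longrightarrow> X \<le> X' \<Longrightarrow> max (-M) (min M X) \<le> max (-M') (min M' X')"
  by (simp add: max_def min_def)

lemma clampN: "(0::real) \<le> M' \<Longrightarrow> M' \<le> M \<Longrightarrow> X \<le> X' \<Longrightarrow> X' \<le> 0 \<Longrightarrow> max (-M) (min M X) \<le> max (-M') (min M' X')"
  by (simp add: max_def min_def)

lemma plus_mono:
  assumes "K \<ge> 0" "L > 0" "p \<le> p'" "q \<le> q'"
  shows "Adelta_plus K L p q \<le> Adelta_plus K L p' q'"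
proof -
  define a where "a = max p 0" define b where "b = max q 0"
  define a' where "a' = max p' 0" define b' where "b' = max q' 0"
  have ab: "0 \<le> a" "a \<le> a'" "0 \<le> b" "b \<le> b'" using assms by (simp_all add: a_def a'_def b_def b'_def)
  have "a^2 * b \<le> a'^2 * b'" using ab by (intro mult_mono power_mono) auto
  then have r: "root 3 (a^2*b) \<le> root 3 (a'^2*b')" by (intro real_root_le_mono) auto
  have r0: "0 \<le> root 3 (a^2*b)" using ab by (intro real_root_ge_zero) auto
  have r0': "0 \<le> root 3 (a'^2*b')" using ab by (intro real_root_ge_zero) auto
  have e1: "\<bar>A a b\<bar> = root 3 (a^2*b)" "\<bar>A a' b'\<bar> = root 3 (a'^2*b')"
    using r0 r0' unfolding A_def by simp_all
  have "min \<bar>A a b\<bar> (K * \<bar>a\<bar>) \<le> min \<bar>A a' b'\<bar> (K * \<bar>a'\<bar>)"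
    unfolding e1 using r ab assms(1) by (intro min.mono mult_left_mono) auto
  note f2 = this
  have f4: "L * b \<le> L * b'" using ab assms by auto
  have f3: "L*b \<ge> 0" using ab assms by simp
  have f1: "min \<bar>A a b\<bar> (K * \<bar>a\<bar>) \<ge> 0" using assms by auto
  show ?thesis
    unfolding Adelta_plus_def Adelta_alt[OF assms(1,2)] a_def[symmetric] b_def[symmetric] a'_def[symmetric] b'_def[symmetric]
    by (rule clampP[OF f1 f2 f3 f4])
qed

lemma minus_mono:
  assumes "K \<ge> 0" "L > 0" "p \<le> p'" "q \<le> q'"
  shows "Adelta_minus K L p q \<le> Adelta_minus K L p' q'"
proof -
  define a where "a = min p 0" define b where "b = min q 0"
  define a' where "a' = min p' 0" define b' where "b' = min q' 0"
  have ab: "a \<le> 0" "a \<le> a'" "a' \<le> 0" "b \<le> 0" "b \<le> b'" "b' \<le> 0" using assms by (simp_all add: a_def a'_def b_def b'_def)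
  have "\<bar>a'\<bar> \<le> \<bar>a\<bar>" using ab by auto
  then have "a'^2 \<le> a^2" by (metis power2_abs power_mono abs_ge_zero)
  then have "a'^2 * (-b') \<le> a^2 * (-b)" using ab by (intro mult_mono) auto
  then have r: "root 3 (a'^2*(-b')) \<le> root 3 (a^2*(-b))" by (intro real_root_le_mono) auto
  have r0: "0 \<le> root 3 (a'^2*(-b'))" using ab by (intro real_root_ge_zero mult_nonneg_nonneg) auto
  have e1: "\<bar>A a b\<bar> = root 3 (a^2*(-b))" unfolding A_def
    by (metis abs_minus_cancel abs_of_nonneg mult_minus_right real_root_minus real_root_ge_zero ab(4) neg_0_le_iff_le zero_le_power2 mult_nonneg_nonneg)
  have e2: "\<bar>A a' b'\<bar> = root 3 (a'^2*(-b'))" unfolding A_def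
    by (metis abs_minus_cancel abs_of_nonneg mult_minus_right real_root_minus real_root_ge_zero ab(6) neg_0_le_iff_le zero_le_power2 mult_nonneg_nonneg)
  have f2: "min \<bar>A a' b'\<bar> (K * \<bar>a'\<bar>) \<le> min \<bar>A a b\<bar> (K * \<bar>a\<bar>)"
    unfolding e1 e2 using r ab assms(1) by (intro min.mono mult_left_mono) auto
  have f3: "L * b \<le> L * b'" using ab assms by auto
  have f4: "L*b' \<le> 0" using ab assms by (auto simp: mult_nonneg_nonpos)
  have f1: "min \<bar>A a' b'\<bar> (K * \<bar>a'\<bar>) \<ge> 0" using assms by auto
  show ?thesis
    unfolding Adelta_minus_def Adelta_alt[OF assms(1,2)] a_def[symmetric] b_def[symmetric] a'_def[symmetric] b'_def[symmetric]
    by (rule clampN[OF f1 f2 f3 f4])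
qed

lemma avg_limit:
  fixes f :: "real \<times> real \<Rightarrow> real"
  assumes g: "isCont g x"
    and H: "\<And>h y. h > 0 \<Longrightarrow> \<exists>a b. \<bar>a - y\<bar> \<le> h \<and> \<bar>b - y\<bar> \<le> h \<and> f (h, y) = (g a + g b) / 2"
  shows "(f \<longlongrightarrow> g x) (at (0, x) within ({0<..} \<times> UNIV))"
proof (rule tendstoI)
  fix e :: real assume e: "e > 0"
  obtain d where d: "d > 0" "\<And>z. dist z x < d \<Longrightarrow> dist (g z) (g x) < e"
    using g e unfolding continuous_at_eps_delta by blast
  show "\<forall>\<^sub>F p in at (0, x) within {0::real<..} \<times> UNIV. dist (f p) (g x) < e"
    unfolding eventually_at
  proof (intro exI[of _ "d/2"] conjI ballI impI)
    show "d/2 > 0" using d by simp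
    fix p assume p: "p \<in> {0::real<..} \<times> (UNIV::real set)" and pd: "p \<noteq> (0, x) \<and> dist p (0, x) < d / 2"
    obtain h y :: real where hy: "p = (h, y)" by fastforce
    have h: "h > 0" using p hy by auto
    have "dist h 0 < d/2" using dist_fst_le[of p "(0,x)"] pd hy by simp
    then have h2: "h < d/2" using h by simp
    have "dist y x < d/2" using dist_snd_le[of p "(0,x)"] pd hy by simp
    then have y2: "\<bar>y - x\<bar> < d/2" by (simp add: dist_real_def)
    obtain a b where ab: "\<bar>a - y\<bar> \<le> h" "\<bar>b - y\<bar> \<le> h" "f (h, y) = (g a + g b) / 2" using H[OF h] by blast
    have "dist a x < d" "dist b x < d" unfolding dist_real_def
      using ab(1,2) h2 y2 abs_triangle_ineq[of "a-y" "y-x"] abs_triangle_ineq[of "b-y" "y-x"] by auto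
    then have "\<bar>g a - g x\<bar> < e" "\<bar>g b - g x\<bar> < e" using d by (auto simp: dist_real_def)
    then show "dist (f p) (g x) < e" using hy ab by (simp add: dist_real_def abs_less_iff field_simps)
  qed
qed

lemma final_id:
  assumes "K \<ge> 0" "L > 0"
  shows "Adelta_plus K L (max (max (- a) a) 0) (- b) + Adelta_minus K L (min (min (- a) a) 0) (- b)
       = - Adelta K L a b"
proof -
  have m1: "max (max (- a) a) 0 = \<bar>a\<bar>" and m2: "min (min (- a) a) 0 = - \<bar>a\<bar>" by auto
  have A1: "A (\<bar>a\<bar>) (-b) = - A a b" "A (-\<bar>a\<bar>) (-b) = - A a b"
    unfolding A_def by (simp_all add: real_root_minus[symmetric])
  have P: "Adelta K L \<bar>a\<bar> (-b) = - Adelta K L a b" unfolding Adelta_def A1 by (simp add: sgn_minus)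
  have N: "Adelta K L (-\<bar>a\<bar>) (-b) = - Adelta K L a b" unfolding Adelta_def A1 by (simp add: sgn_minus)
  have Z: "Adelta K L p 0 = 0" for p by (simp add: Adelta_def)
  have m3: "max \<bar>a\<bar> 0 = \<bar>a\<bar>" "min (-\<bar>a\<bar>) 0 = -\<bar>a\<bar>" by auto
  show ?thesis
  proof (cases "b \<le> 0")
    case True
    then have e: "max (-b) 0 = -b" "min (-b) 0 = 0" by auto
    show ?thesis unfolding Adelta_plus_def Adelta_minus_def m1 m2 m3 e P Z by simp
  next
    case False
    then have e: "max (-b) 0 = 0" "min (-b) 0 = -b" by auto
    show ?thesis unfolding Adelta_plus_def Adelta_minus_def m1 m2 m3 e N Z by simp
  qed
qed

theorem mainTheorem7:
  fixes K L :: real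
  assumes "K > 0" and "L > 0"
  shows "(\<forall>h u x. schemeE K L h u x = schemeE_rep K L h x (u x) (\<lambda>y. u x - u y))
    \<and> (\<forall>h > 0. fd_elliptic (schemeE_rep K L h))
    \<and> fd_consistent (schemeE K L) (\<lambda>u x. - F1D K L u x)"
proof (intro conjI allI impI)
  have K0: "K \<ge> 0" using assms by simp
  fix h u x
  show "schemeE K L h u x = schemeE_rep K L h x (u x) (\<lambda>y. u x - u y)"
  proof -
    have e1: "- ((u (x + h) - u x) / h) = (u x - u (x + h)) / h" by (metis minus_diff_eq minus_divide_left)
    have "-(u (x + h) - 2 * u x + u (x - h)) = u x - u (x + h) + (u x - u (x - h))" by simp
    then have e2: "- ((u (x + h) - 2 * u x + u (x - h)) / h\<^sup>2) = (u x - u (x + h) + (u x - u (x - h))) / h\<^sup>2"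
      by (metis minus_divide_left)
    show ?thesis
      unfolding schemeE_def schemeE_rep_def abs_plus_def neg_abs_minus_def Dplus_def Dminus_def uxx_def Let_def e1 e2 ..
  qed
next
  have K0: "K \<ge> 0" using assms by simp
  fix h :: real assume h: "h > 0"
  show "fd_elliptic (schemeE_rep K L h)"
    unfolding fd_elliptic_def
  proof (intro allI impI)
    fix x r s :: real and v w :: "real \<Rightarrow> real"
    assume "r \<le> s" and vw: "\<forall>y. v y \<le> w y"
    have 1: "v (x+h)/h \<le> w (x+h)/h" "v (x-h)/h \<le> w (x-h)/h" using vw h by (auto intro: divide_right_mono)
    have 2: "(v (x+h) + v (x-h))/h\<^sup>2 \<le> (w (x+h) + w (x-h))/h\<^sup>2" using vw
      by (intro divide_right_mono add_mono) auto
    show "schemeE_rep K L h x r v \<le> schemeE_rep K L h x s w"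
      unfolding schemeE_rep_def Let_def
      by (intro add_mono plus_mono minus_mono K0 assms(2) 2 max.mono min.mono order_refl 1)
  qed
next
  have K0: "K \<ge> 0" using assms by simp
  show "fd_consistent (schemeE K L) (\<lambda>u x. - F1D K L u x)"
    unfolding fd_consistent_def
  proof (intro allI impI)
    fix \<phi> and x :: real
    assume "smooth_fun \<phi>"
    then obtain D where D0: "D 0 = \<phi>" and DD: "\<And>n z. (D n has_real_derivative D (Suc n) z) (at z)"
      unfolding smooth_fun_def by blast
    have cont: "isCont (D n) z" for n z using DD DERIV_isCont by blast
    have d1: "deriv \<phi> = D 1" using DD[of 0] D0 by (intro ext DERIV_imp_deriv) auto
    have d2: "deriv (D 1) = D 2" using DD[of 1] by (intro ext DERIV_imp_deriv) (simp add: numeral_2_eq_2)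
    have F: "F1D K L \<phi> x = Adelta K L (D 1 x) (D 2 x)" unfolding F1D_def d1 d2 ..
    let ?S = "at (0::real, x) within ({0<..} \<times> UNIV)"
    have mvt: "\<exists>z. y < z \<and> z < y + h \<and> \<phi> (y+h) - \<phi> y = h * D 1 z" if "h > 0" for h y
      using MVT2[of y "y+h" \<phi> "D 1"] that DD[of 0] D0 by auto
    have L1: "((\<lambda>p. - Dplus (fst p) \<phi> (snd p)) \<longlongrightarrow> - D 1 x) ?S"
    proof (rule avg_limit[where g="\<lambda>z. - D 1 z"])
      show "isCont (\<lambda>z. - D 1 z) x" using cont by (intro continuous_intros)
      fix h y :: real assume h: "h > 0"
      obtain z where "y < z" "z < y + h" "\<phi> (y+h) - \<phi> y = h * D 1 z" using mvt[OF h] by blast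
      then show "\<exists>a b. \<bar>a - y\<bar> \<le> h \<and> \<bar>b - y\<bar> \<le> h \<and> - Dplus (fst (h, y)) \<phi> (snd (h, y)) = (- D 1 a + - D 1 b) / 2"
        using h by (intro exI[of _ z]) (auto simp: Dplus_def)
    qed
    have L2: "((\<lambda>p. Dminus (fst p) \<phi> (snd p)) \<longlongrightarrow> D 1 x) ?S"
    proof (rule avg_limit)
      show "isCont (D 1) x" using cont by simp
      fix h y :: real assume h: "h > 0"
      obtain z where "y - h < z" "z < y" "\<phi> y - \<phi> (y - h) = h * D 1 z" using mvt[OF h, of "y-h"] by auto
      then show "\<exists>a b. \<bar>a - y\<bar> \<le> h \<and> \<bar>b - y\<bar> \<le> h \<and> Dminus (fst (h, y)) \<phi> (snd (h, y)) = (D 1 a + D 1 b) / 2"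
        using h by (intro exI[of _ z]) (auto simp: Dminus_def)
    qed
    have L3: "((\<lambda>p. - uxx (fst p) \<phi> (snd p)) \<longlongrightarrow> - D 2 x) ?S"
    proof (rule avg_limit[where g="\<lambda>z. - D 2 z"])
      show "isCont (\<lambda>z. - D 2 z) x" using cont by (intro continuous_intros)
      fix h y :: real assume h: "h > 0"
      have DER: "\<forall>m t. m < 2 \<and> a \<le> t \<and> t \<le> b \<longrightarrow> DERIV (D m) t :> D (Suc m) t" for a b :: real
        using DD by blast
      obtain t1 where t1: "y < t1" "t1 < y + h"
        "\<phi> (y+h) = (\<Sum>m<2. (D m y / fact m) * (y + h - y)^m) + (D 2 t1 / fact 2) * (y + h - y)^2"
        using Taylor_up[of 2 D \<phi> y "y+h" y, OF _ D0 DER] h by auto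
      obtain t2 where t2: "y - h < t2" "t2 < y"
        "\<phi> (y-h) = (\<Sum>m<2. (D m y / fact m) * (y - h - y)^m) + (D 2 t2 / fact 2) * (y - h - y)^2"
        using Taylor_down[of 2 D \<phi> "y-h" y y, OF _ D0 DER] h by auto
      have "\<phi> (y+h) = \<phi> y + D 1 y * h + D 2 t1 / 2 * h^2"
        using t1(3) D0 by (simp add: numeral_2_eq_2)
      moreover have "\<phi> (y-h) = \<phi> y - D 1 y * h + D 2 t2 / 2 * h^2"
        using t2(3) D0 by (simp add: numeral_2_eq_2)
      ultimately have "- uxx h \<phi> y = (- D 2 t1 + - D 2 t2) / 2"
        unfolding uxx_def using h by (simp add: field_simps power2_eq_square)
      then show "\<exists>a b. \<bar>a - y\<bar> \<le> h \<and> \<bar>b - y\<bar> \<le> h \<and> - uxx (fst (h, y)) \<phi> (snd (h, y)) = (- D 2 a + - D 2 b) / 2"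
        using t1 t2 by (intro exI[of _ t1] exI[of _ t2]) auto
    qed
    have "((\<lambda>p. Adelta_plus K L (abs_plus (fst p) \<phi> (snd p)) (- uxx (fst p) \<phi> (snd p))
        + Adelta_minus K L (neg_abs_minus (fst p) \<phi> (snd p)) (- uxx (fst p) \<phi> (snd p)))
      \<longlongrightarrow> Adelta_plus K L (max (max (- D 1 x) (D 1 x)) 0) (- D 2 x)
        + Adelta_minus K L (min (min (- D 1 x) (D 1 x)) 0) (- D 2 x)) ?S"
      unfolding Adelta_plus_def Adelta_minus_def abs_plus_def neg_abs_minus_def
      by (intro tendsto_add Adelta_cont K0 assms(2) tendsto_max tendsto_min L1 L2 L3 tendsto_const)
    then have "((\<lambda>p. schemeE K L (fst p) \<phi> (snd p)) \<longlongrightarrow> - F1D K L \<phi> x) ?S"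
      unfolding F final_id[OF K0 assms(2)] schemeE_def .
    then show "((\<lambda>(h, y). schemeE K L h \<phi> y) \<longlongrightarrow> - F1D K L \<phi> x) ?S"
      by (simp add: case_prod_beta')
  qed
qed

end
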